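(* There is an absolute constant $c>0$ such that for every odd $n$, every mapping $\phi$ from ${\sf XOR}$ to ${\sf Majority}$ on $\{0,1\}^n$, and every $i\in[n]$, we have $\mathbb{E}_{x}[{\sf dist}(\phi(x),\phi(x+e_i))]\ge c\sqrt{n}$, where $x$ is uniform in $\{0,1\}^n$.
   Context: ${\sf XOR}(x)=\sum_i x_i \bmod 2$; ${\sf Majority}(x)=1$ iff $\sum_i x_i>n/2$. A mapping from $f$ to $g$ is a bijection $\phi$ of $\{0,1\}^n$ with $f(z)=g(\phi(z))$ for all $z$. $e_i$ is the $i$-th unit vector, addition mod 2, ${\sf dist}$ Hamming distance. *)

theory Defs
  imports Complex_Main
begin

text \<open>Points of the Boolean cube {0,1}^n are boolean lists of length n
  (True = 1); coordinate i (0-based) is x ! i.\<close>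

definition cube :: "nat \<Rightarrow> bool list set" where
  "cube n = {x. length x = n}"

definition weight :: "bool list \<Rightarrow> nat" where
  "weight x = length (filter id x)"

definition XOR :: "bool list \<Rightarrow> bool" where
  "XOR x = odd (weight x)"

definition Majority :: "bool list \<Rightarrow> bool" where
  "Majority x = (real (weight x) > real (length x) / 2)"

text \<open>x + e_i (addition mod 2): flip coordinate i.\<close>
definition flip :: "bool list \<Rightarrow> nat \<Rightarrow> bool list" where
  "flip x i = x[i := \<not> x ! i]"

definition dist_H :: "bool list \<Rightarrow> bool list \<Rightarrow> nat" where
  "dist_H x y = card {j. j < length x \<and> x ! j \<noteq> y ! j}"

text \<open>A mapping from f to g on {0,1}^n: a bijection phi of the cube with f z = g (phi z).\<close>
definition is_mapping :: "nat \<Rightarrow> (bool list \<Rightarrow> bool) \<Rightarrow> (bool list \<Rightarrow> bool)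
    \<Rightarrow> (bool list \<Rightarrow> bool list) \<Rightarrow> bool" where
  "is_mapping n f g \<phi> \<longleftrightarrow> bij_betw \<phi> (cube n) (cube n) \<and> (\<forall>z \<in> cube n. f z = g (\<phi> z))"

end

theory Submission
  imports Defs
begin

lemma cube_Suc: "cube (Suc n) = Cons True ` cube n \<union> Cons False ` cube n"
  unfolding cube_def
  by (auto simp: length_Suc_conv)

lemma finite_cube: "finite (cube n)"
  by (induction n) (auto simp: cube_Suc, simp add: cube_def)

lemma sum_cube_Suc: "sum f (cube (Suc n)) = (\<Sum>x\<in>cube n. f (True # x) + f (False # x))"
proof -
  have "sum f (cube (Suc n)) = sum f (Cons True ` cube n) + sum f (Cons False ` cube n)"
    unfolding cube_Suc by (rule sum.union_disjoint) (auto simp: finite_cube)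
  also have "\<dots> = (\<Sum>x\<in>cube n. f (True # x)) + (\<Sum>x\<in>cube n. f (False # x))"
    by (simp add: sum.reindex)
  finally show ?thesis by (simp add: sum.distrib)
qed

definition S :: "bool list \<Rightarrow> real" where
  "S y = 2 * real (weight y) - real (length y)"

lemma S_True: "S (True # x) = S x + 1" by (simp add: S_def weight_def)
lemma S_False: "S (False # x) = S x - 1" by (simp add: S_def weight_def)

lemma cube0: "cube 0 = {[]}" by (auto simp: cube_def)

lemma card_cube: "card (cube n) = 2 ^ n"
proof (induction n)
  case 0 then show ?case by (simp add: cube0)
next
  case (Suc n)
  have "card (cube (Suc n)) = card (Cons True ` cube n) + card (Cons False ` cube n)"
    unfolding cube_Suc by (rule card_Un_disjoint) (auto simp: finite_cube)
  also have "\<dots> = 2 ^ n + 2 ^ n" using Suc by (simp add: card_image)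
  finally show ?case by simp
qed

lemma sum_one: "(\<Sum>x\<in>cube n. (1::real)) = 2 ^ n"
  by (simp add: card_cube)

lemma M2: "(\<Sum>x\<in>cube n. S x ^ 2) = real n * 2 ^ n"
proof (induction n)
  case 0 then show ?case by (simp add: cube0 S_def weight_def)
next
  case (Suc n)
  have "(\<Sum>x\<in>cube (Suc n). S x ^ 2) = (\<Sum>x\<in>cube n. 2 * S x ^ 2 + 2)"
    by (simp add: sum_cube_Suc S_True S_False power2_eq_square algebra_simps)
  also have "\<dots> = 2 * (\<Sum>x\<in>cube n. S x ^ 2) + 2 * 2 ^ n"
    by (simp add: sum.distrib sum_distrib_left[symmetric] sum_one card_cube)
  finally show ?case using Suc by (simp add: algebra_simps)
qed

lemma M4: "(\<Sum>x\<in>cube n. S x ^ 4) = (3 * real n ^ 2 - 2 * real n) * 2 ^ n"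
proof (induction n)
  case 0 then show ?case by (simp add: cube0 S_def weight_def)
next
  case (Suc n)
  have "(\<Sum>x\<in>cube (Suc n). S x ^ 4) = (\<Sum>x\<in>cube n. 2 * S x ^ 4 + 12 * S x ^ 2 + 2)"
    unfolding sum_cube_Suc by (intro sum.cong refl) (simp add: S_True S_False power2_eq_square algebra_simps
        power4_eq_xxxx)
  also have "\<dots> = 2 * (\<Sum>x\<in>cube n. S x ^ 4) + 12 * (\<Sum>x\<in>cube n. S x ^ 2) + 2 * 2 ^ n"
    by (simp add: sum.distrib sum_distrib_left[symmetric] sum_one card_cube)
  finally show ?case using Suc M2 by (simp add: algebra_simps power2_eq_square)
qed

lemma pointwise:
  fixes r s :: real assumes "r > 0"
  shows "s^2/(2*r) - s^4/(32*r^3) \<le> \<bar>s\<bar>"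
proof -
  define a where "a = \<bar>s\<bar>"
  have a0: "a \<ge> 0" by (simp add: a_def)
  have aa: "a * a = s * s" by (simp add: a_def abs_mult_self_eq)
  have s2: "s^2 = a^2" "s^4 = a^4"
    by (simp add: aa power2_eq_square, simp only: power4_eq_xxxx, metis aa mult.assoc)
  have key: "16 * r^2 * a \<le> a^3 + 32 * r^3"
  proof (cases "a \<le> 4 * r")
    case True
    have "a^3 - 16*r^2*a + 32*r^3 = (a-2*r)^2*(a+4*r) + 4*r^2*(4*r - a)"
      by (simp add: algebra_simps power2_eq_square power3_eq_cube)
    moreover have "(a-2*r)^2*(a+4*r) \<ge> 0" using a0 assms by simp
    moreover have "4*r^2*(4*r - a) \<ge> 0" using True by simp
    ultimately show ?thesis by linarith
  next
    case False
    then have "(4*r)^2 \<le> a^2" using assms by (intro power_mono) auto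
    then have "a^2 \<ge> 16 * r^2" by (simp add: power_mult_distrib)
    then have "a * (16*r^2) \<le> a * a^2" using a0 by (intro mult_left_mono) auto
    moreover have "r^3 > 0" using assms by simp
    ultimately show ?thesis by (simp add: power2_eq_square power3_eq_cube algebra_simps)
  qed
  have "16*r^2*a^2 - a^4 \<le> 32*r^3*a"
  proof -
    have "a * (16 * r^2 * a) \<le> a * (a^3 + 32 * r^3)" using key a0 by (rule mult_left_mono)
    then show ?thesis by (simp add: algebra_simps power2_eq_square power3_eq_cube power4_eq_xxxx)
  qed
  moreover have "s^2/(2*r) - s^4/(32*r^3) = (16*r^2*a^2 - a^4) / (32*r^3)"
    unfolding s2 using assms by (simp add: field_simps power2_eq_square power3_eq_cube)
  moreover have "32*r^3 > 0" using assms by simp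
  ultimately show ?thesis
    by (simp add: a_def divide_le_eq mult.commute)
qed

lemma weight_upd: "i < length x \<Longrightarrow>
  weight (x[i := v]) + (if x!i then 1 else 0) = weight x + (if v then 1 else 0)"
proof (induction x arbitrary: i)
  case Nil then show ?case by simp
next
  case (Cons y ys)
  show ?case
  proof (cases i)
    case 0 then show ?thesis by (auto simp: weight_def)
  next
    case (Suc k)
    have "k < length ys" using Cons.prems Suc by simp
    from Cons.IH[OF this] show ?thesis using Suc by (cases v; cases "ys!k") (simp_all add: weight_def)
  qed
qed

lemma XOR_flip: "i < length x \<Longrightarrow> XOR (flip x i) \<noteq> XOR x"
proof -
  assume "i < length x"
  then have "weight (flip x i) = Suc (weight x) \<or> weight x = Suc (weight (flip x i))"
    using weight_upd[of i x "\<not> x!i"] unfolding flip_def by (cases "x!i") auto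
  then show ?thesis unfolding XOR_def by auto
qed

lemma dist_H_zip: "length a = length b \<Longrightarrow>
  dist_H a b = length (filter (\<lambda>p. fst p \<noteq> snd p) (zip a b))"
  unfolding dist_H_def length_filter_conv_card by (simp add: nth_zip cong: conj_cong)

lemma dist_ge: "length a = length b \<Longrightarrow>
  \<bar>real (weight a) - real (weight b)\<bar> \<le> real (dist_H a b)"
proof (induction a b rule: list_induct2)
  case Nil then show ?case by (simp add: weight_def dist_H_def)
next
  case (Cons x xs y ys)
  then show ?case by (auto simp: dist_H_zip weight_def)
qed

lemma flip_cube: "x \<in> cube n \<Longrightarrow> flip x i \<in> cube n"
  by (simp add: cube_def flip_def)

lemma flip_flip: "i < length x \<Longrightarrow> flip (flip x i) i = x"
  by (simp add: flip_def)

lemma bij_flip: "i < n \<Longrightarrow> bij_betw (\<lambda>x. flip x i) (cube n) (cube n)"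
  apply (rule bij_betw_byWitness[where f' = "\<lambda>x. flip x i"])
  by (auto simp: flip_cube flip_flip cube_def flip_def)

lemma pair_bound:
  assumes "a \<in> cube n" "b \<in> cube n" "Majority a \<noteq> Majority b"
  shows "\<bar>S a\<bar> / 2 + \<bar>S b\<bar> / 2 \<le> real (dist_H a b)"
proof -
  have la: "length a = n" "length b = n" using assms by (auto simp: cube_def)
  have "\<bar>real (weight a) - real (weight b)\<bar> \<le> real (dist_H a b)"
    using dist_ge la by simp
  moreover have "\<bar>S a\<bar> / 2 + \<bar>S b\<bar> / 2 = \<bar>real (weight a) - real (weight b)\<bar>"
    using assms(3) la unfolding Majority_def S_def by (auto split: abs_split simp: field_simps)
  ultimately show ?thesis by simp
qed

lemma sum_lower:
  assumes "is_mapping n XOR Majority \<phi>" "i < n"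
  shows "(\<Sum>y\<in>cube n. \<bar>S y\<bar>) \<le> (\<Sum>x\<in>cube n. real (dist_H (\<phi> x) (\<phi> (flip x i))))"
proof -
  have bij: "bij_betw \<phi> (cube n) (cube n)" and pres: "\<And>z. z \<in> cube n \<Longrightarrow> XOR z = Majority (\<phi> z)"
    using assms(1) unfolding is_mapping_def by auto
  have bij2: "bij_betw (\<phi> \<circ> (\<lambda>x. flip x i)) (cube n) (cube n)"
    using bij_betw_trans[OF bij_flip[OF assms(2)] bij] .
  have s1: "(\<Sum>x\<in>cube n. \<bar>S (\<phi> x)\<bar>) = (\<Sum>y\<in>cube n. \<bar>S y\<bar>)"
    using sum.reindex_bij_betw[OF bij, of "\<lambda>y. \<bar>S y\<bar>"] by simp
  have s2: "(\<Sum>x\<in>cube n. \<bar>S (\<phi> (flip x i))\<bar>) = (\<Sum>y\<in>cube n. \<bar>S y\<bar>)"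
    using sum.reindex_bij_betw[OF bij2, of "\<lambda>y. \<bar>S y\<bar>"] by simp
  have pt: "\<bar>S (\<phi> x)\<bar> / 2 + \<bar>S (\<phi> (flip x i))\<bar> / 2 \<le> real (dist_H (\<phi> x) (\<phi> (flip x i)))"
    if x: "x \<in> cube n" for x
  proof (rule pair_bound)
    show "\<phi> x \<in> cube n" using bij x by (auto dest: bij_betw_apply)
    show "\<phi> (flip x i) \<in> cube n" using bij flip_cube[OF x] by (auto dest: bij_betw_apply)
    have "i < length x" using x assms(2) by (simp add: cube_def)
    then show "Majority (\<phi> x) \<noteq> Majority (\<phi> (flip x i))"
      using XOR_flip pres[OF x] pres[OF flip_cube[OF x]] by metis
  qed
  have "(\<Sum>y\<in>cube n. \<bar>S y\<bar>) = (\<Sum>x\<in>cube n. \<bar>S (\<phi> x)\<bar> / 2 + \<bar>S (\<phi> (flip x i))\<bar> / 2)"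
    by (simp add: sum.distrib sum_divide_distrib[symmetric] s1 s2)
  also have "\<dots> \<le> (\<Sum>x\<in>cube n. real (dist_H (\<phi> x) (\<phi> (flip x i))))"
    by (rule sum_mono) (rule pt)
  finally show ?thesis .
qed

lemma abs_lower:
  assumes "n > 0"
  shows "(\<Sum>y\<in>cube n. \<bar>S y\<bar>) \<ge> 2 ^ n * sqrt (real n) / 4"
proof -
  define r where "r = sqrt (real n)"
  have r0: "r > 0" using assms by (simp add: r_def)
  have r2: "r^2 = real n" by (simp add: r_def)
  have "(\<Sum>y\<in>cube n. S y^2/(2*r) - S y^4/(32*r^3)) \<le> (\<Sum>y\<in>cube n. \<bar>S y\<bar>)"
    by (rule sum_mono) (rule pointwise[OF r0])
  moreover have "(\<Sum>y\<in>cube n. S y^2/(2*r) - S y^4/(32*r^3))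
      = (real n * 2 ^ n) / (2*r) - ((3 * real n ^ 2 - 2 * real n) * 2 ^ n) / (32*r^3)"
    by (simp add: sum_subtractf sum_divide_distrib[symmetric] M2 M4)
  moreover have "(real n * 2 ^ n) / (2*r) - ((3 * real n ^ 2 - 2 * real n) * 2 ^ n) / (32*r^3)
      \<ge> 2 ^ n * r / 4"
  proof -
    have "(real n * 2 ^ n) / (2*r) = 2^n * r / 2"
      using r0 unfolding r2[symmetric] by (simp add: field_simps power2_eq_square)
    moreover have "((3 * real n ^ 2 - 2 * real n) * 2 ^ n) / (32*r^3) \<le> (3 * real n ^ 2 * 2 ^ n) / (32*r^3)"
      using r0 by (intro divide_right_mono) auto
    moreover have "(3 * real n ^ 2 * 2 ^ n) / (32*r^3) = 3 * 2^n * r / 32"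
      using r0 unfolding r2[symmetric] by (simp add: field_simps power2_eq_square power3_eq_cube)
    moreover have "(0::real) \<le> 2^n * r" using r0 by simp
    ultimately show ?thesis by linarith
  qed
  ultimately show ?thesis unfolding r_def by linarith
qed

theorem mainTheorem6:
  shows "\<exists>c::real. c > 0 \<and>
    (\<forall>n::nat. \<forall>\<phi> i. odd n \<longrightarrow> is_mapping n XOR Majority \<phi> \<longrightarrow> i < n \<longrightarrow>
       (\<Sum>x\<in>cube n. real (dist_H (\<phi> x) (\<phi> (flip x i)))) / 2 ^ n \<ge> c * sqrt (real n))"
proof (intro exI[of _ "1/4"] conjI allI impI)
  fix n :: nat and \<phi> i
  assume "odd n" "is_mapping n XOR Majority \<phi>" "i < n"
  then have "n > 0" by auto
  have "2 ^ n * sqrt (real n) / 4 \<le> (\<Sum>x\<in>cube n. real (dist_H (\<phi> x) (\<phi> (flip x i))))"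
    using abs_lower[OF \<open>n > 0\<close>] sum_lower[OF \<open>is_mapping n XOR Majority \<phi>\<close> \<open>i < n\<close>] by linarith
  then show "1/4 * sqrt (real n) \<le> (\<Sum>x\<in>cube n. real (dist_H (\<phi> x) (\<phi> (flip x i)))) / 2 ^ n"
    by (simp add: field_simps)
qed simp

end
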